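(* Let $n\ge1$ and let $f\in\mathcal{G}_1$ be $n$-ary, $f=2x_1\cdots x_n\left(\sum_{i=1}^n a_ix_i^2+\sum_{i=1}^n b_ix_i+c\right)$. (i) If $a_i=1$ for some $i$, then $4r_k\in C(f)$ for every $1\le k\le n+2$. (ii) If $b_i=1$ for some $i$, then $4r_k\in C(f)$ for every $1\le k\le n+1$.
   Context: All operations are on $\mathbb{Z}_8$. $\mathcal{G}_1$ is the set of all operations (of any arity $n\ge1$) of the form $2x_1\cdots x_n\left(\sum_{i=1}^n a_ix_i^2+\sum_{i=1}^n b_ix_i+c\right)$ with $a_i,b_i\in\{0,1\}$ and $c\in\{0,1,2,3\}$. For an operation $f$, $C(f)$ denotes the clone on $\mathbb{Z}_8$ generated by $f$ together with binary addition and all unary constant operations. $r_k=x_1x_2\cdots x_k$. *)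

theory Defs
  imports "HOL-Library.Numeral_Type"
begin

text \<open>An operation of arity n is
represented as a pair (n, g) with g :: (nat => 8) => 8 that only looks at
the arguments x 0, ..., x (n-1) (arguments are 0-indexed).\<close>

type_synonym z8op = "nat \<times> ((nat \<Rightarrow> 8) \<Rightarrow> 8)"

inductive_set clone_gen :: "z8op set \<Rightarrow> z8op set" for F :: "z8op set" where
  proj: "i < n \<Longrightarrow> (n, \<lambda>x. x i) \<in> clone_gen F"
| gen: "p \<in> F \<Longrightarrow> p \<in> clone_gen F"
| comp: "(m, g) \<in> clone_gen F \<Longrightarrow> (\<forall>j<m. (n, h j) \<in> clone_gen F)
          \<Longrightarrow> (n, \<lambda>x. g (\<lambda>j. h j x)) \<in> clone_gen F"

definition C :: "nat \<Rightarrow> ((nat \<Rightarrow> 8) \<Rightarrow> 8) \<Rightarrow> z8op set" where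
  "C n f = clone_gen ({(n, f), (2, \<lambda>x. x 0 + x 1)} \<union> {(1, \<lambda>x. c) | c. True})"

definition G1op :: "nat \<Rightarrow> (nat \<Rightarrow> 8) \<Rightarrow> (nat \<Rightarrow> 8) \<Rightarrow> 8 \<Rightarrow> (nat \<Rightarrow> 8) \<Rightarrow> 8" where
  "G1op n a b c = (\<lambda>x. 2 * (\<Prod>i<n. x i) *
      ((\<Sum>i<n. a i * (x i)^2) + (\<Sum>i<n. b i * x i) + c))"

definition four_r :: "nat \<Rightarrow> (nat \<Rightarrow> 8) \<Rightarrow> 8" where
  "four_r k = (\<lambda>x. 4 * (\<Prod>i<k. x i))"

end

theory Submission
  imports Defs
begin

lemma neg8: "- (v::8) = 7 * v"
proof -
  have e8: "(8::8) = 0" by simp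
  have "(7::8) = -1" by simp
  then show ?thesis by (simp add: e8)
qed

lemma prod_if_lt:
  fixes x :: "nat \<Rightarrow> 8"
  shows "k \<le> N \<Longrightarrow> (\<Prod>j<N. if j < k then x j else 1) = (\<Prod>j<k. x j)"
proof (induction N)
  case 0 then show ?case by simp
next
  case (Suc N)
  show ?case
  proof (cases "k \<le> N")
    case True then show ?thesis using Suc by simp
  next
    case False then have "k = Suc N" using Suc.prems by simp
    then show ?thesis by simp
  qed
qed

context
  fixes n :: nat and f :: "(nat \<Rightarrow> 8) \<Rightarrow> 8"
begin

lemma cg_add:
  assumes "(m, g) \<in> C n f" "(m, h) \<in> C n f"
  shows "(m, \<lambda>x. g x + h x) \<in> C n f"
proof -
  have A: "(2, \<lambda>x. x 0 + x 1) \<in> C n f" unfolding C_def by (rule clone_gen.gen) auto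
  have "\<forall>j<2. (m, (\<lambda>j. if j = 0 then g else h) j) \<in> C n f" using assms by auto
  from clone_gen.comp[OF A[unfolded C_def] this[unfolded C_def]]
  show ?thesis unfolding C_def by simp
qed

lemma cg_const:
  assumes "m \<ge> 1"
  shows "(m, \<lambda>x. d) \<in> C n f"
proof -
  have A: "(1, \<lambda>x. d) \<in> C n f" unfolding C_def by (rule clone_gen.gen) auto
  have "\<forall>j<1. (m, (\<lambda>j x. x 0) j) \<in> C n f" using assms unfolding C_def
    by (auto intro: clone_gen.proj)
  from clone_gen.comp[OF A[unfolded C_def] this[unfolded C_def]]
  show ?thesis unfolding C_def by simp
qed

lemma cg_proj: "i < m \<Longrightarrow> (m, \<lambda>x. x i) \<in> C n f"
  unfolding C_def by (rule clone_gen.proj)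

lemma cg_smult: "(m, g) \<in> C n f \<Longrightarrow> (m, \<lambda>x. of_nat (Suc k) * g x) \<in> C n f"
proof (induction k)
  case 0
  then show ?case by simp
next
  case (Suc k)
  have e: "\<And>y. of_nat (Suc (Suc k)) * y = of_nat (Suc k) * y + (y::8)"
    by (metis of_nat_Suc distrib_right mult_1_left add.commute)
  from cg_add[OF Suc.IH[OF Suc.prems] Suc.prems] show ?case
    by (simp only: e)
qed

lemma cg_neg: "(m, g) \<in> C n f \<Longrightarrow> (m, \<lambda>x. - g x) \<in> C n f"
  using cg_smult[of m g 6] by (simp add: neg8)

lemma cg_diff: "(m, g) \<in> C n f \<Longrightarrow> (m, h) \<in> C n f \<Longrightarrow> (m, \<lambda>x. g x - h x) \<in> C n f"
  using cg_add[of m g "\<lambda>x. - h x"] cg_neg[of m h] by simp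

lemma cg_subst:
  assumes "(m, t) \<in> C n f" "i < n" "n \<le> m"
  shows "(m, \<lambda>x. f (\<lambda>j. if j = i then t x else x j)) \<in> C n f"
proof -
  have A: "(n, f) \<in> C n f" unfolding C_def by (rule clone_gen.gen) auto
  have "\<forall>j<n. (m, (\<lambda>j x. if j = i then t x else x j) j) \<in> C n f"
  proof (intro allI impI)
    fix j assume "j < n"
    show "(m, (\<lambda>j x. if j = i then t x else x j) j) \<in> C n f"
    proof (cases "j = i")
      case True then show ?thesis using assms(1) by simp
    next
      case False then show ?thesis using cg_proj[of j m] \<open>j < n\<close> assms(3) by simp
    qed
  qed
  from clone_gen.comp[OF A[unfolded C_def] this[unfolded C_def]]
  show ?thesis unfolding C_def by simp
qed

lemma cg_lower:
  assumes "(N, four_r N) \<in> C n f" "1 \<le> k" "k \<le> N"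
  shows "(k, four_r k) \<in> C n f"
proof -
  have "\<forall>j<N. (k, (\<lambda>j x. if j < k then x j else 1) j) \<in> C n f"
  proof (intro allI impI)
    fix j assume "j < N"
    show "(k, (\<lambda>j x. if j < k then x j else 1) j) \<in> C n f"
    proof (cases "j < k")
      case True then show ?thesis using cg_proj[of j k] by simp
    next
      case False then show ?thesis using cg_const[of k 1] assms(2) by simp
    qed
  qed
  from clone_gen.comp[OF assms(1)[unfolded C_def] this[unfolded C_def]]
  have "(k, \<lambda>x. four_r N (\<lambda>j. if j < k then x j else 1)) \<in> C n f"
    unfolding C_def by simp
  moreover have "(\<lambda>x. four_r N (\<lambda>j. if j < k then x j else 1)) = four_r k"
    using prod_if_lt[OF assms(3)] unfolding four_r_def by (auto intro!: ext)
  ultimately show ?thesis by simp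
qed

end

lemma G1_split:
  assumes "i < n"
  shows "G1op n a b c (\<lambda>j. if j = i then t else x j) =
    2 * (\<Prod>j\<in>{..<n}-{i}. x j) * t * (a i * t^2 + b i * t +
      ((\<Sum>j\<in>{..<n}-{i}. a j * (x j)^2) + (\<Sum>j\<in>{..<n}-{i}. b j * x j) + c))"
proof -
  let ?y = "\<lambda>j. if j = i then t else x j"
  have P: "(\<Prod>j<n. ?y j) = t * (\<Prod>j\<in>{..<n}-{i}. x j)"
    using assms by (simp add: prod.remove[of "{..<n}" i])
  have S1: "(\<Sum>j<n. a j * (?y j)^2) = a i * t^2 + (\<Sum>j\<in>{..<n}-{i}. a j * (x j)^2)"
    using assms by (simp add: sum.remove[of "{..<n}" i])
  have S2: "(\<Sum>j<n. b j * ?y j) = b i * t + (\<Sum>j\<in>{..<n}-{i}. b j * x j)"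
    using assms by (simp add: sum.remove[of "{..<n}" i])
  show ?thesis unfolding G1op_def P S1 S2 by (simp add: algebra_simps)
qed


lemma alg3:
  fixes Q X Y Z B R :: "'a::comm_ring_1"
  shows "2*Q*(X+Y+Z)*((X+Y+Z)^2 + B*(X+Y+Z) + R) - 2*Q*(X+Y)*((X+Y)^2 + B*(X+Y) + R)
    - 2*Q*(X+Z)*((X+Z)^2 + B*(X+Z) + R) - 2*Q*(Y+Z)*((Y+Z)^2 + B*(Y+Z) + R)
    + 2*Q*X*(X^2 + B*X + R) + 2*Q*Y*(Y^2 + B*Y + R) + 2*Q*Z*(Z^2 + B*Z + R)
    = 12*(Q*X)*Y*Z"
  by (simp add: algebra_simps power2_eq_square)

lemma alg2:
  fixes Q X Y R :: "'a::comm_ring_1"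
  shows "2*Q*(X+Y)*(0*(X+Y)^2 + (X+Y) + R) - 2*Q*X*(0*X^2 + X + R) - 2*Q*Y*(0*Y^2 + Y + R)
    = 4*(Q*X)*Y"
  by (simp add: algebra_simps power2_eq_square)

lemma caseA:
  assumes "i < n" "a i = 1"
  shows "(n + 2, four_r (n + 2)) \<in> C n (G1op n a b c)"
proof -
  let ?f = "G1op n a b c"
  let ?F = "\<lambda>t x. ?f (\<lambda>j. if j = i then t x else x j)"
  have sub: "(n+2, ?F t) \<in> C n ?f" if "(n+2, t) \<in> C n ?f" for t
    using cg_subst[OF that assms(1)] by simp
  have pX: "(n+2, \<lambda>x. x i) \<in> C n ?f" using assms by (intro cg_proj) simp
  have pY: "(n+2, \<lambda>x. x n) \<in> C n ?f" by (intro cg_proj) simp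
  have pZ: "(n+2, \<lambda>x. x (Suc n)) \<in> C n ?f" by (intro cg_proj) simp
  have "(n+2, \<lambda>x. ?F (\<lambda>x. x i + x n + x (Suc n)) x - ?F (\<lambda>x. x i + x n) x
     - ?F (\<lambda>x. x i + x (Suc n)) x - ?F (\<lambda>x. x n + x (Suc n)) x
     + ?F (\<lambda>x. x i) x + ?F (\<lambda>x. x n) x + ?F (\<lambda>x. x (Suc n)) x) \<in> C n ?f"
    by (intro cg_add cg_diff sub pX pY pZ)
  moreover have "(\<lambda>x. ?F (\<lambda>x. x i + x n + x (Suc n)) x - ?F (\<lambda>x. x i + x n) x
     - ?F (\<lambda>x. x i + x (Suc n)) x - ?F (\<lambda>x. x n + x (Suc n)) x
     + ?F (\<lambda>x. x i) x + ?F (\<lambda>x. x n) x + ?F (\<lambda>x. x (Suc n)) x) = four_r (n+2)"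
  proof
    fix x :: "nat \<Rightarrow> 8"
    have pr: "(\<Prod>j<n+2. x j) = ((\<Prod>j\<in>{..<n}-{i}. x j) * x i) * x n * x (Suc n)"
      using assms(1) by (simp add: prod.remove[of "{..<n}" i] mult_ac)
    have e8: "(8::8) = 0" by simp
    have "(12::8) = 4" by simp
    then show "?F (\<lambda>x. x i + x n + x (Suc n)) x - ?F (\<lambda>x. x i + x n) x
     - ?F (\<lambda>x. x i + x (Suc n)) x - ?F (\<lambda>x. x n + x (Suc n)) x
     + ?F (\<lambda>x. x i) x + ?F (\<lambda>x. x n) x + ?F (\<lambda>x. x (Suc n)) x = four_r (n+2) x"
      unfolding four_r_def pr G1_split[OF assms(1)] assms(2) mult_1_left alg3 by (simp add: e8)
  qed
  ultimately show ?thesis by simp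
qed

lemma caseB:
  assumes "i < n" "a i = 0" "b i = 1"
  shows "(n + 1, four_r (n + 1)) \<in> C n (G1op n a b c)"
proof -
  let ?f = "G1op n a b c"
  let ?F = "\<lambda>t x. ?f (\<lambda>j. if j = i then t x else x j)"
  have sub: "(n+1, ?F t) \<in> C n ?f" if "(n+1, t) \<in> C n ?f" for t
    using cg_subst[OF that assms(1)] by simp
  have pX: "(n+1, \<lambda>x. x i) \<in> C n ?f" using assms by (intro cg_proj) simp
  have pY: "(n+1, \<lambda>x. x n) \<in> C n ?f" by (intro cg_proj) simp
  have "(n+1, \<lambda>x. ?F (\<lambda>x. x i + x n) x - ?F (\<lambda>x. x i) x - ?F (\<lambda>x. x n) x) \<in> C n ?f"
    by (intro cg_add cg_diff sub pX pY)
  moreover have "(\<lambda>x. ?F (\<lambda>x. x i + x n) x - ?F (\<lambda>x. x i) x - ?F (\<lambda>x. x n) x) = four_r (n+1)"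
  proof
    fix x :: "nat \<Rightarrow> 8"
    have pr: "(\<Prod>j<n+1. x j) = ((\<Prod>j\<in>{..<n}-{i}. x j) * x i) * x n"
      using assms(1) by (simp add: prod.remove[of "{..<n}" i] mult_ac)
    show "?F (\<lambda>x. x i + x n) x - ?F (\<lambda>x. x i) x - ?F (\<lambda>x. x n) x = four_r (n+1) x"
      unfolding four_r_def pr G1_split[OF assms(1)] assms(2,3) mult_1_left alg2 by simp
  qed
  ultimately show ?thesis by simp
qed

theorem lemma4p1:
  fixes n :: nat and a b :: "nat \<Rightarrow> 8" and c :: 8
  assumes "n \<ge> 1"
    and "\<forall>i<n. a i \<in> {0, 1}"
    and "\<forall>i<n. b i \<in> {0, 1}"
    and "c \<in> {0, 1, 2, 3}"
  shows "((\<exists>i<n. a i = 1) \<longrightarrow>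
            (\<forall>k. 1 \<le> k \<and> k \<le> n + 2 \<longrightarrow> (k, four_r k) \<in> C n (G1op n a b c)))
       \<and> ((\<exists>i<n. b i = 1) \<longrightarrow>
            (\<forall>k. 1 \<le> k \<and> k \<le> n + 1 \<longrightarrow> (k, four_r k) \<in> C n (G1op n a b c)))"
proof (intro conjI impI allI)
  fix k assume "\<exists>i<n. a i = 1" and k: "1 \<le> k \<and> k \<le> n + 2"
  then obtain i where i: "i < n" "a i = 1" by blast
  show "(k, four_r k) \<in> C n (G1op n a b c)"
  proof (rule cg_lower)
    show "(n + 2, four_r (n + 2)) \<in> C n (G1op n a b c)"
      using caseA[where a=a and b=b and c=c, OF i] .
    show "1 \<le> k" "k \<le> n + 2" using k by auto
  qed
next
  fix k assume "\<exists>i<n. b i = 1" and k: "1 \<le> k \<and> k \<le> n + 1"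
  then obtain i where i: "i < n" "b i = 1" by blast
  show "(k, four_r k) \<in> C n (G1op n a b c)"
  proof (cases "a i = 1")
    case True
    have "(n + 2, four_r (n + 2)) \<in> C n (G1op n a b c)"
      using caseA[where a=a and b=b and c=c, OF i(1) True] .
    moreover have "1 \<le> k" "k \<le> n + 2" using k by auto
    ultimately show ?thesis by (rule cg_lower)
  next
    case False
    then have "a i = 0" using assms(2) i(1) by auto
    have "(n + 1, four_r (n + 1)) \<in> C n (G1op n a b c)"
      using caseB[where a=a and b=b and c=c, OF i(1) \<open>a i = 0\<close> i(2)] .
    moreover have "1 \<le> k" "k \<le> n + 1" using k by auto
    ultimately show ?thesis by (rule cg_lower)
  qed
qed

end
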